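(* Let $H$ be a finite graph with an edge $(x,y)$ such that $\mathrm{Aut}(H;xy)\ne\mathrm{Aut}(H;x,y)$. Then for every positive integer $k$, $$D_2(H,k;xy)=\binom{k}{2}\frac{D(H,k;x,y)}{k^2}\quad\text{and}\quad D_1(H,k;xy)=D(H,k;xy)-\frac{(k-1)\,D(H,k;x,y)}{2k}.$$
   Context: A $k$-labeling of $H$ is a map $\phi:V(H)\to\{1,\dots,k\}$; an automorphism $\pi$ preserves $\phi$ if $\phi(\pi(v))=\phi(v)$ for all $v$. For a subgroup $\Gamma\le\mathrm{Aut}(H)$, $\phi$ is $\Gamma$-distinguishing if the only element of $\Gamma$ preserving $\phi$ is the identity; $\phi,\phi'$ are equivalent with respect to $\Gamma$ if some $\pi\in\Gamma$ satisfies $\phi'(\pi(v))=\phi(v)$ for all $v$; $D(H,k;\Gamma)$ is the number of $\Gamma$-equivalence classes of $\Gamma$-distinguishing $k$-labelings. $\mathrm{Aut}(H;x,y)$ is the group of automorphisms fixing both $x$ and $y$; $\mathrm{Aut}(H;xy)$ is the group of automorphisms mapping the set $\{x,y\}$ to itself. $D(H,k;x,y):=D(H,k;\mathrm{Aut}(H;x,y))$, $D(H,k;xy):=D(H,k;\mathrm{Aut}(H;xy))$. $D_1(H,k;xy)$ (resp. $D_2(H,k;xy)$) is the number of those $\mathrm{Aut}(H;xy)$-equivalence classes of $\mathrm{Aut}(H;xy)$-distinguishing $k$-labelings in which $x$ and $y$ receive the same label (resp. different labels). *)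

theory Defs
  imports Complex_Main "HOL-Library.FuncSet"
begin

definition graph :: "'a set \<Rightarrow> ('a \<Rightarrow> 'a \<Rightarrow> bool) \<Rightarrow> bool" where
  "graph V E \<longleftrightarrow> finite V \<and> (\<forall>u v. E u v \<longrightarrow> u \<in> V \<and> v \<in> V)
     \<and> (\<forall>u v. E u v \<longrightarrow> E v u) \<and> (\<forall>v. \<not> E v v)"

definition Aut :: "'a set \<Rightarrow> ('a \<Rightarrow> 'a \<Rightarrow> bool) \<Rightarrow> ('a \<Rightarrow> 'a) set" where
  "Aut V E = {\<pi>. bij_betw \<pi> V V \<and> (\<forall>v. v \<notin> V \<longrightarrow> \<pi> v = v)
                 \<and> (\<forall>u\<in>V. \<forall>v\<in>V. E u v \<longleftrightarrow> E (\<pi> u) (\<pi> v))}"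

definition Aut_fix2 :: "'a set \<Rightarrow> ('a \<Rightarrow> 'a \<Rightarrow> bool) \<Rightarrow> 'a \<Rightarrow> 'a \<Rightarrow> ('a \<Rightarrow> 'a) set" where
  "Aut_fix2 V E x y = {\<pi> \<in> Aut V E. \<pi> x = x \<and> \<pi> y = y}"

definition Aut_set2 :: "'a set \<Rightarrow> ('a \<Rightarrow> 'a \<Rightarrow> bool) \<Rightarrow> 'a \<Rightarrow> 'a \<Rightarrow> ('a \<Rightarrow> 'a) set" where
  "Aut_set2 V E x y = {\<pi> \<in> Aut V E. \<pi> ` {x, y} = {x, y}}"

definition labelings :: "'a set \<Rightarrow> nat \<Rightarrow> ('a \<Rightarrow> nat) set" where
  "labelings V k = V \<rightarrow>\<^sub>E {1..k}"

definition preserves :: "'a set \<Rightarrow> ('a \<Rightarrow> 'a) \<Rightarrow> ('a \<Rightarrow> nat) \<Rightarrow> bool" where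
  "preserves V \<pi> \<phi> \<longleftrightarrow> (\<forall>v\<in>V. \<phi> (\<pi> v) = \<phi> v)"

definition distinguishing :: "'a set \<Rightarrow> ('a \<Rightarrow> 'a) set \<Rightarrow> ('a \<Rightarrow> nat) \<Rightarrow> bool" where
  "distinguishing V \<Gamma> \<phi> \<longleftrightarrow> (\<forall>\<pi>\<in>\<Gamma>. preserves V \<pi> \<phi> \<longrightarrow> (\<forall>v\<in>V. \<pi> v = v))"

definition equiv_lab :: "'a set \<Rightarrow> ('a \<Rightarrow> 'a) set \<Rightarrow> ('a \<Rightarrow> nat) \<Rightarrow> ('a \<Rightarrow> nat) \<Rightarrow> bool" where
  "equiv_lab V \<Gamma> \<phi> \<phi>' \<longleftrightarrow> (\<exists>\<pi>\<in>\<Gamma>. \<forall>v\<in>V. \<phi>' (\<pi> v) = \<phi> v)"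

definition dist_classes :: "'a set \<Rightarrow> nat \<Rightarrow> ('a \<Rightarrow> 'a) set \<Rightarrow> ('a \<Rightarrow> nat) set set" where
  "dist_classes V k \<Gamma> =
     {\<phi> \<in> labelings V k. distinguishing V \<Gamma> \<phi>} // {(\<phi>, \<phi>'). equiv_lab V \<Gamma> \<phi> \<phi>'}"

definition D :: "'a set \<Rightarrow> nat \<Rightarrow> ('a \<Rightarrow> 'a) set \<Rightarrow> nat" where
  "D V k \<Gamma> = card (dist_classes V k \<Gamma>)"

definition D_fix2 :: "'a set \<Rightarrow> ('a \<Rightarrow> 'a \<Rightarrow> bool) \<Rightarrow> nat \<Rightarrow> 'a \<Rightarrow> 'a \<Rightarrow> nat" where
  "D_fix2 V E k x y = D V k (Aut_fix2 V E x y)"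

definition D_set2 :: "'a set \<Rightarrow> ('a \<Rightarrow> 'a \<Rightarrow> bool) \<Rightarrow> nat \<Rightarrow> 'a \<Rightarrow> 'a \<Rightarrow> nat" where
  "D_set2 V E k x y = D V k (Aut_set2 V E x y)"

definition D1 :: "'a set \<Rightarrow> ('a \<Rightarrow> 'a \<Rightarrow> bool) \<Rightarrow> nat \<Rightarrow> 'a \<Rightarrow> 'a \<Rightarrow> nat" where
  "D1 V E k x y = card {C \<in> dist_classes V k (Aut_set2 V E x y). \<forall>\<phi>\<in>C. \<phi> x = \<phi> y}"

definition D2 :: "'a set \<Rightarrow> ('a \<Rightarrow> 'a \<Rightarrow> bool) \<Rightarrow> nat \<Rightarrow> 'a \<Rightarrow> 'a \<Rightarrow> nat" where
  "D2 V E k x y = card {C \<in> dist_classes V k (Aut_set2 V E x y). \<forall>\<phi>\<in>C. \<phi> x \<noteq> \<phi> y}"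

end

theory Submission
  imports Defs
begin


definition pgroup :: "'a set \<Rightarrow> ('a \<Rightarrow> 'a) set \<Rightarrow> bool" where
  "pgroup V G \<longleftrightarrow> id \<in> G \<and> (\<forall>p\<in>G. bij p \<and> p ` V = V \<and> (\<forall>v. v \<notin> V \<longrightarrow> p v = v))
     \<and> (\<forall>p\<in>G. \<forall>q\<in>G. p \<circ> q \<in> G) \<and> (\<forall>p\<in>G. inv p \<in> G)"

lemma Aut_bij:
  assumes "p \<in> Aut V E" shows "bij p"
proof -
  have b: "bij_betw p V V" and o: "\<forall>v. v \<notin> V \<longrightarrow> p v = v" using assms by (auto simp: Aut_def)
  have "inj p"
  proof (rule injI)
    fix u v assume e: "p u = p v"
    show "u = v"
    proof (cases "u \<in> V"; cases "v \<in> V")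
      assume "u \<in> V" "v \<in> V" thus ?thesis using b e by (auto simp: bij_betw_def inj_on_def)
    next
      assume "u \<in> V" "v \<notin> V" thus ?thesis using b e o by (metis bij_betwE)
    next
      assume "u \<notin> V" "v \<in> V" thus ?thesis using b e o by (metis bij_betwE)
    next
      assume "u \<notin> V" "v \<notin> V" thus ?thesis using e o by auto
    qed
  qed
  moreover have "surj p"
  proof -
    { fix w have "w \<in> range p"
      proof (cases "w \<in> V")
        case True thus ?thesis using b by (metis bij_betw_imp_surj_on imageE rangeI)
      next
        case False thus ?thesis using o by (metis rangeI)
      qed }
    thus ?thesis by auto
  qed
  ultimately show ?thesis by (simp add: bij_def)
qed

lemma Aut_image: "p \<in> Aut V E \<Longrightarrow> p ` V = V"
  by (auto simp: Aut_def bij_betw_def)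

lemma Aut_inv:
  assumes "p \<in> Aut V E" shows "inv p \<in> Aut V E"
proof -
  have bp: "bij p" using Aut_bij[OF assms] .
  have im: "p ` V = V" using Aut_image[OF assms] .
  have o: "\<forall>v. v \<notin> V \<longrightarrow> p v = v" and ed: "\<forall>u\<in>V. \<forall>v\<in>V. E u v \<longleftrightarrow> E (p u) (p v)"
    using assms by (auto simp: Aut_def)
  have iv: "inv p ` V = V" using im bp by (metis bij_is_inj image_inv_f_f)
  have "bij_betw (inv p) V V" using iv bp
    by (metis bij_betw_subset bij_imp_bij_inv subset_UNIV)
  moreover have "\<forall>v. v \<notin> V \<longrightarrow> inv p v = v" using o bp by (metis bij_is_inj inv_f_f)
  moreover have "\<forall>u\<in>V. \<forall>v\<in>V. E u v \<longleftrightarrow> E (inv p u) (inv p v)"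
  proof (intro ballI)
    fix u v assume "u \<in> V" "v \<in> V"
    hence "inv p u \<in> V" "inv p v \<in> V" using iv by auto
    hence "E (inv p u) (inv p v) \<longleftrightarrow> E (p (inv p u)) (p (inv p v))" using ed by auto
    thus "E u v \<longleftrightarrow> E (inv p u) (inv p v)" using bp by (simp add: bij_is_surj surj_f_inv_f)
  qed
  ultimately show ?thesis by (simp add: Aut_def)
qed

lemma Aut_comp:
  assumes p: "p \<in> Aut V E" and q: "q \<in> Aut V E" shows "p \<circ> q \<in> Aut V E"
proof -
  have bp: "bij_betw p V V" and op: "\<forall>v. v \<notin> V \<longrightarrow> p v = v" and ep: "\<forall>u\<in>V. \<forall>v\<in>V. E u v \<longleftrightarrow> E (p u) (p v)"
    using p by (auto simp: Aut_def)
  have bq: "bij_betw q V V" and oq: "\<forall>v. v \<notin> V \<longrightarrow> q v = v" and eq: "\<forall>u\<in>V. \<forall>v\<in>V. E u v \<longleftrightarrow> E (q u) (q v)"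
    using q by (auto simp: Aut_def)
  have "bij_betw (p \<circ> q) V V" by (rule bij_betw_trans[OF bq bp])
  moreover have "\<forall>v. v \<notin> V \<longrightarrow> (p \<circ> q) v = v" using op oq by simp
  moreover have "\<forall>u\<in>V. \<forall>v\<in>V. E u v \<longleftrightarrow> E ((p \<circ> q) u) ((p \<circ> q) v)"
  proof (intro ballI)
    fix u v assume u: "u \<in> V" and v: "v \<in> V"
    have "q u \<in> V" "q v \<in> V" using bq u v by (auto dest: bij_betwE)
    thus "E u v \<longleftrightarrow> E ((p \<circ> q) u) ((p \<circ> q) v)" using ep eq u v by (metis comp_apply)
  qed
  ultimately show ?thesis by (simp add: Aut_def)
qed

lemma Aut_id: "id \<in> Aut V E"
  by (simp add: Aut_def)

lemma pgroup_set2: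
  assumes "x \<in> V" "y \<in> V"
  shows "pgroup V (Aut_set2 V E x y)"
proof -
  have i: "inv p ` {x, y} = {x, y}" if "p \<in> Aut V E" "p ` {x,y} = {x,y}" for p
    using that Aut_bij[OF that(1)] by (metis bij_is_inj image_inv_f_f)
  have c: "(p \<circ> q) ` {x, y} = {x, y}" if "p ` {x,y} = {x,y}" "q ` {x,y} = {x,y}" for p q :: "'a \<Rightarrow> 'a"
    using that by (metis image_comp)
  have o: "\<forall>v. v \<notin> V \<longrightarrow> p v = v" if "p \<in> Aut V E" for p using that by (simp add: Aut_def)
  have im: "p ` V = V" if "p \<in> Aut V E" for p using that Aut_image by blast
  show ?thesis unfolding pgroup_def Aut_set2_def
    using Aut_bij Aut_inv Aut_comp Aut_id i c o im by auto
qed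

lemma pgroup_fix2:
  assumes "x \<in> V" "y \<in> V"
  shows "pgroup V (Aut_fix2 V E x y)"
proof -
  have i: "inv p x = x" if "p \<in> Aut V E" "p x = x" for p x
    using that Aut_bij[OF that(1)] by (metis bij_is_inj inv_f_f)
  have o: "\<forall>v. v \<notin> V \<longrightarrow> p v = v" if "p \<in> Aut V E" for p using that by (simp add: Aut_def)
  have im: "p ` V = V" if "p \<in> Aut V E" for p using that Aut_image by blast
  show ?thesis unfolding pgroup_def Aut_fix2_def
    using Aut_bij Aut_inv Aut_comp Aut_id i o im by auto
qed



definition Rel :: "'a set \<Rightarrow> ('a \<Rightarrow> 'a) set \<Rightarrow> (('a \<Rightarrow> nat) \<times> ('a \<Rightarrow> nat)) set" where
  "Rel V G = {(\<phi>, \<phi>'). equiv_lab V G \<phi> \<phi>'}"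

lemma pg_bij: "pgroup V G \<Longrightarrow> p \<in> G \<Longrightarrow> bij p" by (simp add: pgroup_def)
lemma pg_out: "pgroup V G \<Longrightarrow> p \<in> G \<Longrightarrow> v \<notin> V \<Longrightarrow> p v = v" by (simp add: pgroup_def)
lemma pg_in: "pgroup V G \<Longrightarrow> p \<in> G \<Longrightarrow> v \<in> V \<Longrightarrow> p v \<in> V" unfolding pgroup_def by blast
lemma pg_id: "pgroup V G \<Longrightarrow> id \<in> G" by (simp add: pgroup_def)
lemma pg_comp: "pgroup V G \<Longrightarrow> p \<in> G \<Longrightarrow> q \<in> G \<Longrightarrow> p \<circ> q \<in> G" by (simp add: pgroup_def)
lemma pg_inv: "pgroup V G \<Longrightarrow> p \<in> G \<Longrightarrow> inv p \<in> G" by (simp add: pgroup_def)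
lemma pg_fi: "pgroup V G \<Longrightarrow> p \<in> G \<Longrightarrow> p (inv p v) = v"
  by (meson bij_inv_eq_iff pg_bij)
lemma pg_if: "pgroup V G \<Longrightarrow> p \<in> G \<Longrightarrow> inv p (p v) = v"
  by (metis bij_is_inj inv_f_f pg_bij)

lemma equivR: assumes "pgroup V G" shows "equiv UNIV (Rel V G)"
proof (rule equivI)
  show "refl (Rel V G)"
  proof -
    { fix a have "(a, a) \<in> Rel V G" using pg_id[OF assms] unfolding Rel_def equiv_lab_def
        by (auto intro!: bexI[of _ id]) }
    thus ?thesis by (auto simp: refl_on_def)
  qed
  show "Rel V G \<subseteq> UNIV \<times> UNIV" by simp
  show "sym (Rel V G)" unfolding sym_def Rel_def equiv_lab_def
  proof (clarsimp)
    fix a b p assume p: "p \<in> G" and h: "\<forall>v\<in>V. b (p v) = a v"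
    show "\<exists>q\<in>G. \<forall>v\<in>V. a (q v) = b v"
      apply (rule bexI[of _ "inv p"])
      using h pg_fi[OF assms p] pg_in[OF assms pg_inv[OF assms p]] pg_inv[OF assms p] by auto metis
  qed
  show "trans (Rel V G)" unfolding trans_def Rel_def equiv_lab_def
  proof (clarsimp)
    fix a b c p q assume p: "p \<in> G" "\<forall>v\<in>V. b (p v) = a v" and q: "q \<in> G" "\<forall>v\<in>V. c (q v) = b v"
    show "\<exists>r\<in>G. \<forall>v\<in>V. c (r v) = a v"
      apply (rule bexI[of _ "q \<circ> p"])
      using p q pg_in[OF assms] pg_comp[OF assms q(1) p(1)] by auto
  qed
qed

lemma finite_G: assumes "pgroup V G" "finite V" shows "finite G"
proof -
  have "inj_on (\<lambda>p. restrict p V) G"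
  proof
    fix p q assume "p \<in> G" "q \<in> G" "restrict p V = restrict q V"
    thus "p = q" using pg_out[OF assms(1)] by (metis ext restrict_apply')
  qed
  moreover have "(\<lambda>p. restrict p V) ` G \<subseteq> V \<rightarrow>\<^sub>E V" using pg_in[OF assms(1)] by auto
  moreover have "finite (V \<rightarrow>\<^sub>E V)" using assms(2) by (simp add: finite_PiE)
  ultimately show ?thesis by (meson finite_imageD finite_subset)
qed

lemma dist_act:
  assumes g: "pgroup V G" and d: "distinguishing V G \<phi>" and p: "p \<in> G"
  shows "distinguishing V G (restrict (\<phi> \<circ> p) V)"
  unfolding distinguishing_def preserves_def
proof (intro ballI impI)
  fix t v assume t: "t \<in> G" and pr: "\<forall>v\<in>V. restrict (\<phi> \<circ> p) V (t v) = restrict (\<phi> \<circ> p) V v"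
    and v: "v \<in> V"
  have pr2: "\<forall>w\<in>V. \<phi> (p (t w)) = \<phi> (p w)" using pr pg_in[OF g t] by auto
  let ?s = "p \<circ> t \<circ> inv p"
  have s: "?s \<in> G" using g p t by (simp add: pg_comp pg_inv)
  have "preserves V ?s \<phi>" unfolding preserves_def
  proof
    fix w assume w: "w \<in> V"
    have "inv p w \<in> V" using pg_in[OF g pg_inv[OF g p] w] .
    thus "\<phi> (?s w) = \<phi> w" using pr2 pg_fi[OF g p] by auto
  qed
  hence "\<forall>w\<in>V. ?s w = w" using d s unfolding distinguishing_def by blast
  hence "?s (p v) = p v" using pg_in[OF g p v] by blast
  hence "p (t v) = p v" using pg_if[OF g p] by simp
  thus "t v = v" using pg_bij[OF g p] by (meson bij_is_inj injD)
qed

lemma orbit_eq: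
  assumes g: "pgroup V G" and l: "\<phi> \<in> labelings V k"
  shows "Rel V G `` {\<phi>} \<inter> labelings V k = (\<lambda>p. restrict (\<phi> \<circ> p) V) ` G"
proof
  show "Rel V G `` {\<phi>} \<inter> labelings V k \<subseteq> (\<lambda>p. restrict (\<phi> \<circ> p) V) ` G"
  proof
    fix \<psi> assume "\<psi> \<in> Rel V G `` {\<phi>} \<inter> labelings V k"
    then obtain p where p: "p \<in> G" "\<forall>v\<in>V. \<psi> (p v) = \<phi> v" and ps: "\<psi> \<in> labelings V k"
      by (auto simp: Rel_def equiv_lab_def)
    have "\<psi> = restrict (\<phi> \<circ> inv p) V"
    proof
      fix v show "\<psi> v = restrict (\<phi> \<circ> inv p) V v"
      proof (cases "v \<in> V")
        case True
        hence "inv p v \<in> V" using pg_in[OF g pg_inv[OF g p(1)]] by blast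
        thus ?thesis using True p(2) pg_fi[OF g p(1)] by fastforce
      next
        case False thus ?thesis using ps by (auto simp: labelings_def PiE_def extensional_def)
      qed
    qed
    thus "\<psi> \<in> (\<lambda>p. restrict (\<phi> \<circ> p) V) ` G" using pg_inv[OF g p(1)] by blast
  qed
  show "(\<lambda>p. restrict (\<phi> \<circ> p) V) ` G \<subseteq> Rel V G `` {\<phi>} \<inter> labelings V k"
  proof
    fix \<psi> assume "\<psi> \<in> (\<lambda>p. restrict (\<phi> \<circ> p) V) ` G"
    then obtain p where p: "p \<in> G" and ps: "\<psi> = restrict (\<phi> \<circ> p) V" by blast
    have "\<forall>v\<in>V. \<psi> (inv p v) = \<phi> v" using ps pg_in[OF g pg_inv[OF g p]] pg_fi[OF g p] by auto
    hence "\<psi> \<in> Rel V G `` {\<phi>}" using pg_inv[OF g p] by (auto simp: Rel_def equiv_lab_def)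
    moreover have "\<psi> \<in> labelings V k" using ps l pg_in[OF g p] by (auto simp: labelings_def)
    ultimately show "\<psi> \<in> Rel V G `` {\<phi>} \<inter> labelings V k" by blast
  qed
qed

lemma inj_act:
  assumes g: "pgroup V G" and d: "distinguishing V G \<phi>"
  shows "inj_on (\<lambda>p. restrict (\<phi> \<circ> p) V) G"
proof
  fix p q assume p: "p \<in> G" and q: "q \<in> G" and e: "restrict (\<phi> \<circ> p) V = restrict (\<phi> \<circ> q) V"
  have e2: "\<forall>v\<in>V. \<phi> (p v) = \<phi> (q v)" using e by (metis comp_apply restrict_apply')
  let ?s = "p \<circ> inv q"
  have s: "?s \<in> G" using g p q by (simp add: pg_comp pg_inv)
  have "preserves V ?s \<phi>" unfolding preserves_def
  proof
    fix w assume w: "w \<in> V"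
    have "inv q w \<in> V" using pg_in[OF g pg_inv[OF g q] w] .
    thus "\<phi> (?s w) = \<phi> w" using e2 pg_fi[OF g q] by (metis comp_apply)
  qed
  hence h: "\<forall>w\<in>V. ?s w = w" using d s unfolding distinguishing_def by blast
  show "p = q"
  proof
    fix v show "p v = q v"
    proof (cases "v \<in> V")
      case True
      hence "?s (q v) = q v" using h pg_in[OF g q] by blast
      thus ?thesis using pg_if[OF g q] by simp
    next
      case False thus ?thesis using pg_out[OF g p] pg_out[OF g q] by simp
    qed
  qed
qed

lemma quot_img: "A // r = (\<lambda>a. r `` {a}) ` A"
  by (auto simp: quotient_def)

lemma orbit_count:
  assumes g: "pgroup V G" and fV: "finite V" and B: "B \<subseteq> labelings V k"
    and dB: "\<forall>\<phi>\<in>B. distinguishing V G \<phi>"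
    and cl: "\<forall>\<phi>\<in>B. \<forall>p\<in>G. restrict (\<phi> \<circ> p) V \<in> B"
  shows "card B = card (B // Rel V G) * card G"
proof -
  let ?R = "Rel V G"
  have eq: "equiv UNIV ?R" using equivR[OF g] .
  have fl: "finite (labelings V k)" unfolding labelings_def using fV by (simp add: finite_PiE)
  have fB: "finite B" using B fl finite_subset by blast
  have orb: "?R `` {\<phi>} \<inter> B = (\<lambda>p. restrict (\<phi> \<circ> p) V) ` G" if "\<phi> \<in> B" for \<phi>
  proof -
    have "(\<lambda>p. restrict (\<phi> \<circ> p) V) ` G \<subseteq> B" using cl that by blast
    thus ?thesis using orbit_eq[OF g, of \<phi> k] that B by blast
  qed
  have cardorb: "card (?R `` {\<phi>} \<inter> B) = card G" if "\<phi> \<in> B" for \<phi>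
    using orb[OF that] inj_act[OF g] dB that by (simp add: card_image)
  let ?C = "(\<lambda>c. c \<inter> B) ` (B // ?R)"
  have injC: "inj_on (\<lambda>c. c \<inter> B) (B // ?R)"
  proof
    fix c1 c2 assume c1: "c1 \<in> B // ?R" and c2: "c2 \<in> B // ?R" and e: "c1 \<inter> B = c2 \<inter> B"
    obtain a where a: "a \<in> B" "c1 = ?R `` {a}" using c1 by (auto simp: quotient_def)
    obtain b where b: "b \<in> B" "c2 = ?R `` {b}" using c2 by (auto simp: quotient_def)
    have "a \<in> ?R `` {a}" using eq unfolding equiv_def refl_on_def by blast
    hence "a \<in> ?R `` {b}" using e a b by blast
    hence "(b, a) \<in> ?R" by simp
    thus "c1 = c2" using a b eq by (simp add: equiv_class_eq_iff)
  qed
  have U: "\<Union> ?C = B"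
  proof
    show "\<Union> ?C \<subseteq> B" by blast
    show "B \<subseteq> \<Union> ?C"
    proof
      fix a assume a: "a \<in> B"
      have "a \<in> ?R `` {a}" using eq unfolding equiv_def refl_on_def by blast
      moreover have "?R `` {a} \<in> B // ?R" using a by (auto simp: quotient_def)
      ultimately show "a \<in> \<Union> ?C" using a by blast
    qed
  qed
  have "card G * card ?C = card (\<Union> ?C)"
  proof (rule card_partition)
    show "finite ?C" unfolding quot_img using fB by simp
    show "finite (\<Union> ?C)" using U fB by simp
    show "\<And>c. c \<in> ?C \<Longrightarrow> card c = card G" using cardorb by (auto simp: quotient_def)
    show "c1 \<inter> c2 = {}" if h: "c1 \<in> ?C" "c2 \<in> ?C" "c1 \<noteq> c2" for c1 c2
    proof -
      obtain d1 where d1: "d1 \<in> B // ?R" "c1 = d1 \<inter> B" using h(1) by blast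
      obtain d2 where d2: "d2 \<in> B // ?R" "c2 = d2 \<inter> B" using h(2) by blast
      obtain a where a: "d1 = ?R `` {a}" using d1 by (auto simp: quotient_def)
      obtain b where b: "d2 = ?R `` {b}" using d2 by (auto simp: quotient_def)
      { fix z assume z1: "z \<in> c1" and z2: "z \<in> c2"
        have "(a, z) \<in> ?R" "(b, z) \<in> ?R" using z1 z2 a b d1 d2 by auto
        hence "?R `` {a} = ?R `` {z}" "?R `` {b} = ?R `` {z}" using eq by (simp_all add: equiv_class_eq_iff)
        hence False using a b d1 d2 h(3) by simp }
      thus ?thesis by blast
    qed
  qed
  thus ?thesis using U card_image[OF injC] by (simp add: mult.commute)
qed



lemma two_choose: "2 * (k choose 2) = k * (k - 1)"
proof -
  have "even (k * (k - 1))" by (cases "even k") auto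
  thus ?thesis by (simp add: choose_two)
qed

lemma upd_dist:
  assumes g: "pgroup V F" and fx: "\<forall>p\<in>F. p x = x \<and> p y = y"
  shows "distinguishing V F (\<phi>(x := a, y := b)) \<longleftrightarrow> distinguishing V F \<phi>"
proof -
  have "preserves V p (\<phi>(x := a, y := b)) \<longleftrightarrow> preserves V p \<phi>" if p: "p \<in> F" for p
  proof -
    have "(\<phi>(x := a, y := b)) (p v) = (\<phi>(x := a, y := b)) v \<longleftrightarrow> \<phi> (p v) = \<phi> v" for v
    proof (cases "v = x \<or> v = y")
      case True thus ?thesis using fx p by auto
    next
      case False
      have "p v \<noteq> x" "p v \<noteq> y" using False fx p pg_bij[OF g p] by (metis bij_is_inj injD)+
      thus ?thesis using False by simp
    qed
    thus ?thesis unfolding preserves_def by simp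
  qed
  thus ?thesis unfolding distinguishing_def by simp
qed

theorem lemma14:
  fixes V :: "'a set" and E :: "'a \<Rightarrow> 'a \<Rightarrow> bool" and x y :: 'a and k :: nat
  assumes "graph V E" and "E x y"
    and "Aut_set2 V E x y \<noteq> Aut_fix2 V E x y"
    and "k \<ge> 1"
  shows "real (D2 V E k x y) = real (k choose 2) * real (D_fix2 V E k x y) / real k ^ 2
       \<and> real (D1 V E k x y) = real (D_set2 V E k x y) - (real k - 1) * real (D_fix2 V E k x y) / (2 * real k)"
proof -
  have fV: "finite V" and xV: "x \<in> V" and yV: "y \<in> V" and xy: "x \<noteq> y"
    using assms(1,2) unfolding graph_def by blast+
  define G where "G = Aut_set2 V E x y"
  define F where "F = Aut_fix2 V E x y"
  have gG: "pgroup V G" unfolding G_def using pgroup_set2[OF xV yV] .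
  have gF: "pgroup V F" unfolding F_def using pgroup_fix2[OF xV yV] .
  have Fchar: "p \<in> F \<longleftrightarrow> p \<in> G \<and> p x = x \<and> p y = y" for p
    unfolding F_def G_def Aut_fix2_def Aut_set2_def by auto
  have FG: "F \<subseteq> G" using Fchar by blast
  have fxF: "\<forall>p\<in>F. p x = x \<and> p y = y" using Fchar by blast
  have swap: "p x = y \<and> p y = x" if "p \<in> G" "p \<notin> F" for p
  proof -
    have im: "p ` {x, y} = {x, y}" using that(1) unfolding G_def Aut_set2_def by blast
    have "p x \<noteq> p y" using pg_bij[OF gG that(1)] xy by (metis bij_is_inj injD)
    moreover have "p x \<in> {x, y}" "p y \<in> {x, y}" using im by blast+
    moreover have "\<not> (p x = x \<and> p y = y)" using that Fchar by blast
    ultimately show ?thesis by auto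
  qed
  have GF: "G \<noteq> F" using assms(3) unfolding F_def G_def .
  obtain s where s: "s \<in> G" "s \<notin> F" using GF FG by blast
  have sxy: "s x = y" "s y = x" using swap[OF s] by auto
  have finF: "finite F" using finite_G[OF gF fV] .
  have cardG: "card G = 2 * card F"
  proof -
    have GU: "G = F \<union> (\<lambda>p. s \<circ> p) ` F"
    proof
      show "F \<union> (\<lambda>p. s \<circ> p) ` F \<subseteq> G" using FG pg_comp[OF gG s(1)] by blast
      show "G \<subseteq> F \<union> (\<lambda>p. s \<circ> p) ` F"
      proof
        fix t assume t: "t \<in> G"
        show "t \<in> F \<union> (\<lambda>p. s \<circ> p) ` F"
        proof (cases "t \<in> F")
          case True thus ?thesis by blast
        next
          case False
          have txy: "t x = y" "t y = x" using swap[OF t False] by auto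
          have "inv s \<circ> t \<in> G" using pg_comp[OF gG pg_inv[OF gG s(1)] t] .
          moreover have "inv s y = x" "inv s x = y" using pg_if[OF gG s(1)] sxy by metis+
          ultimately have "inv s \<circ> t \<in> F" using Fchar txy by simp
          moreover have "t = s \<circ> (inv s \<circ> t)" using pg_fi[OF gG s(1)] by (simp add: fun_eq_iff)
          ultimately show ?thesis by auto
        qed
      qed
    qed
    have dj: "F \<inter> (\<lambda>p. s \<circ> p) ` F = {}"
    proof -
      { fix p assume a: "p \<in> F" "s \<circ> p \<in> F"
        have "(s \<circ> p) x = x" "p x = x" using fxF a by blast+
        hence "s x = x" by simp
        hence False using sxy xy by simp }
      thus ?thesis by blast
    qed
    have inj: "inj_on (\<lambda>p. s \<circ> p) F"
    proof
      fix p q assume "p \<in> F" "q \<in> F" and eqpq: "s \<circ> p = s \<circ> q"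
      show "p = q"
      proof
        fix v
        have "s (p v) = s (q v)" using eqpq by (metis comp_apply)
        hence "inv s (s (p v)) = inv s (s (q v))" by simp
        thus "p v = q v" by (simp add: pg_if[OF gG s(1)])
      qed
    qed
    show ?thesis unfolding GU using card_Un_disjoint[OF finF finite_imageI[OF finF] dj] card_image[OF inj] by simp
  qed
  have Fpos: "card F > 0" using finF pg_id[OF gF] card_gt_0_iff by blast
  let ?lab = "labelings V k"
  have flab: "finite ?lab" unfolding labelings_def using fV by (simp add: finite_PiE)
  define AF where "AF = {\<phi> \<in> ?lab. distinguishing V F \<phi>}"
  define AG where "AG = {\<phi> \<in> ?lab. distinguishing V G \<phi>}"
  define B2 where "B2 = {\<phi> \<in> AG. \<phi> x \<noteq> \<phi> y}"
  have DF: "D_fix2 V E k x y = card (AF // Rel V F)"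
    unfolding D_fix2_def D_def dist_classes_def AF_def F_def Rel_def ..
  have DG: "D_set2 V E k x y = card (AG // Rel V G)"
    unfolding D_set2_def D_def dist_classes_def AG_def G_def Rel_def ..
  have D1e: "D1 V E k x y = card {C \<in> AG // Rel V G. \<forall>\<phi>\<in>C. \<phi> x = \<phi> y}"
    unfolding D1_def dist_classes_def AG_def G_def Rel_def ..
  have D2e: "D2 V E k x y = card {C \<in> AG // Rel V G. \<forall>\<phi>\<in>C. \<phi> x \<noteq> \<phi> y}"
    unfolding D2_def dist_classes_def AG_def G_def Rel_def ..
  have eqG: "equiv UNIV (Rel V G)" using equivR[OF gG] .
  have self: "\<phi> \<in> Rel V G `` {\<phi>}" for \<phi> using eqG unfolding equiv_def refl_on_def by blast
  have hom: "\<psi> x = \<psi> y \<longleftrightarrow> \<phi> x = \<phi> y" if hps: "\<psi> \<in> Rel V G `` {\<phi>}" for \<phi> \<psi>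
  proof -
    have "equiv_lab V G \<phi> \<psi>" using hps unfolding Rel_def by simp
    then obtain p where p: "p \<in> G" "\<forall>v\<in>V. \<psi> (p v) = \<phi> v" unfolding equiv_lab_def by blast
    have e1: "\<psi> (p x) = \<phi> x" using p(2) xV by blast
    have e2: "\<psi> (p y) = \<phi> y" using p(2) yV by blast
    show ?thesis
    proof (cases "p \<in> F")
      case True
      hence "p x = x \<and> p y = y" using fxF by blast
      thus ?thesis using e1 e2 by metis
    next
      case False
      hence "p x = y \<and> p y = x" using swap[OF p(1)] by blast
      thus ?thesis using e1 e2 by metis
    qed
  qed
  have fQ: "finite (AG // Rel V G)" unfolding quot_img AG_def using flab by simp
  have split: "D_set2 V E k x y = D1 V E k x y + D2 V E k x y"
  proof -
    let ?Q = "AG // Rel V G"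
    let ?P1 = "{C \<in> ?Q. \<forall>\<phi>\<in>C. \<phi> x = \<phi> y}"
    let ?P2 = "{C \<in> ?Q. \<forall>\<phi>\<in>C. \<phi> x \<noteq> \<phi> y}"
    have Qeq: "?Q = ?P1 \<union> ?P2"
    proof -
      { fix C assume C: "C \<in> ?Q"
        then obtain \<phi> where ph: "C = Rel V G `` {\<phi>}" by (auto simp: quotient_def)
        have "(\<forall>\<psi>\<in>C. \<psi> x = \<psi> y) \<or> (\<forall>\<psi>\<in>C. \<psi> x \<noteq> \<psi> y)"
        proof (cases "\<phi> x = \<phi> y")
          case True thus ?thesis using hom ph by blast
        next
          case False thus ?thesis using hom ph by blast
        qed
        hence "C \<in> ?P1 \<union> ?P2" using C by blast }
      thus ?thesis by blast
    qed
    have dj: "?P1 \<inter> ?P2 = {}"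
    proof -
      { fix C assume C1: "C \<in> ?P1" and C2: "C \<in> ?P2"
        then obtain \<phi> where ph: "C = Rel V G `` {\<phi>}" by (auto simp: quotient_def)
        have "\<phi> \<in> C" using self ph by blast
        hence False using C1 C2 by blast }
      thus ?thesis by blast
    qed
    have f1: "finite ?P1" "finite ?P2" using fQ by auto
    have "card (?P1 \<union> ?P2) = card ?P1 + card ?P2" by (rule card_Un_disjoint[OF f1 dj])
    thus ?thesis unfolding DG D1e D2e using Qeq by simp
  qed
  have D2q: "D2 V E k x y = card (B2 // Rel V G)"
  proof -
    have "{C \<in> AG // Rel V G. \<forall>\<phi>\<in>C. \<phi> x \<noteq> \<phi> y} = B2 // Rel V G"
      unfolding quot_img B2_def using hom self by blast
    thus ?thesis using D2e by simp
  qed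
  have B2F: "B2 = {\<phi> \<in> ?lab. distinguishing V F \<phi> \<and> \<phi> x \<noteq> \<phi> y}"
  proof -
    have "distinguishing V G \<phi> \<longleftrightarrow> distinguishing V F \<phi>" if "\<phi> x \<noteq> \<phi> y" for \<phi>
    proof
      assume "distinguishing V G \<phi>" thus "distinguishing V F \<phi>" using FG unfolding distinguishing_def by blast
    next
      assume d: "distinguishing V F \<phi>"
      show "distinguishing V G \<phi>" unfolding distinguishing_def
      proof (intro ballI impI)
        fix p v assume p: "p \<in> G" and pr: "preserves V p \<phi>" and v: "v \<in> V"
        show "p v = v"
        proof (cases "p \<in> F")
          case True thus ?thesis using d pr v unfolding distinguishing_def by blast
        next
          case False
          hence "p x = y" using swap p by blast
          hence False using pr xV that unfolding preserves_def by metis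
          thus ?thesis ..
        qed
      qed
    qed
    thus ?thesis unfolding B2_def AG_def by blast
  qed
  have cAF: "card AF = card (AF // Rel V F) * card F"
  proof (rule orbit_count[OF gF fV])
    show "AF \<subseteq> ?lab" unfolding AF_def by blast
    show "\<forall>\<phi>\<in>AF. distinguishing V F \<phi>" unfolding AF_def by blast
    show "\<forall>\<phi>\<in>AF. \<forall>p\<in>F. restrict (\<phi> \<circ> p) V \<in> AF"
      unfolding AF_def labelings_def using dist_act[OF gF] pg_in[OF gF] by auto
  qed
  have cB2: "card B2 = card (B2 // Rel V G) * card G"
  proof (rule orbit_count[OF gG fV])
    show "B2 \<subseteq> ?lab" unfolding B2_def AG_def by blast
    show "\<forall>\<phi>\<in>B2. distinguishing V G \<phi>" unfolding B2_def AG_def by blast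
    show "\<forall>\<phi>\<in>B2. \<forall>p\<in>G. restrict (\<phi> \<circ> p) V \<in> B2"
    proof (intro ballI)
      fix \<phi> p assume ph: "\<phi> \<in> B2" and p: "p \<in> G"
      have "restrict (\<phi> \<circ> p) V \<in> ?lab" using ph pg_in[OF gG p] unfolding B2_def AG_def labelings_def by auto
      moreover have "distinguishing V G (restrict (\<phi> \<circ> p) V)"
        using dist_act[OF gG _ p] ph unfolding B2_def AG_def by blast
      moreover have "\<phi> (p x) \<noteq> \<phi> (p y)"
      proof (cases "p \<in> F")
        case True thus ?thesis using Fchar ph unfolding B2_def by auto
      next
        case False thus ?thesis using swap[OF p False] ph unfolding B2_def by auto
      qed
      ultimately show "restrict (\<phi> \<circ> p) V \<in> B2" using xV yV unfolding B2_def AG_def by auto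
    qed
  qed
  define S where "S = {\<phi> \<in> AF. \<phi> x = 1 \<and> \<phi> y = 1}"
  define f where "f = (\<lambda>\<phi>::'a \<Rightarrow> nat. ((\<phi> x, \<phi> y), \<phi>(x := 1, y := 1)))"
  define h where "h = (\<lambda>((a::nat, b::nat), \<psi>::'a \<Rightarrow> nat). \<psi>(x := a, y := b))"
  have k1: "1 \<in> {1..k}" using assms(4) by simp
  have labupd: "\<phi>(x := a, y := b) \<in> ?lab" if "\<phi> \<in> ?lab" "a \<in> {1..k}" "b \<in> {1..k}" for \<phi> a b
    using that xV yV unfolding labelings_def by (auto simp: PiE_def extensional_def Pi_def)
  have labval: "\<phi> v \<in> {1..k}" if "\<phi> \<in> ?lab" "v \<in> V" for \<phi> v
    using that unfolding labelings_def by auto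
  have ud: "distinguishing V F (\<phi>(x := a, y := b)) \<longleftrightarrow> distinguishing V F \<phi>" for \<phi> a b
    using upd_dist[OF gF fxF] .
  have bAF: "bij_betw f AF (({1..k} \<times> {1..k}) \<times> S)"
  proof (rule bij_betw_byWitness[where f' = h])
    show "\<forall>a\<in>AF. h (f a) = a" unfolding f_def h_def by (auto simp: fun_eq_iff)
    show "\<forall>a'\<in>({1..k} \<times> {1..k}) \<times> S. f (h a') = a'" unfolding f_def h_def S_def using xy by auto
    show "f ` AF \<subseteq> ({1..k} \<times> {1..k}) \<times> S"
      unfolding f_def S_def AF_def using labupd labval ud k1 xV yV xy by auto
    show "h ` (({1..k} \<times> {1..k}) \<times> S) \<subseteq> AF"
      unfolding h_def S_def AF_def using labupd ud by auto
  qed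
  have bB2: "bij_betw f B2 ((SIGMA a:{1..k}. {1..k} - {a}) \<times> S)"
  proof (rule bij_betw_byWitness[where f' = h])
    show "\<forall>a\<in>B2. h (f a) = a" unfolding f_def h_def by (auto simp: fun_eq_iff)
    show "\<forall>a'\<in>(SIGMA a:{1..k}. {1..k} - {a}) \<times> S. f (h a') = a'" unfolding f_def h_def S_def using xy by auto
    show "f ` B2 \<subseteq> (SIGMA a:{1..k}. {1..k} - {a}) \<times> S"
      unfolding f_def S_def B2F AF_def using labupd labval ud k1 xV yV xy by auto
    show "h ` ((SIGMA a:{1..k}. {1..k} - {a}) \<times> S) \<subseteq> B2"
      unfolding h_def S_def AF_def B2F using labupd ud xy by auto
  qed
  have cAF2: "card AF = k * k * card S"
    using bij_betw_same_card[OF bAF] by (simp add: card_cartesian_product)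
  have cSig: "card (SIGMA a:{1..k}. {1..k} - {a}) = k * (k - 1)"
    by (simp add: card_SigmaI)
  have cB22: "card B2 = k * (k - 1) * card S"
    using bij_betw_same_card[OF bB2] cSig by (simp add: card_cartesian_product)
  define M where "M = card S"
  define dF where "dF = D_fix2 V E k x y"
  define d2 where "d2 = D2 V E k x y"
  define d1 where "d1 = D1 V E k x y"
  define dG where "dG = D_set2 V E k x y"
  define c where "c = card F"
  have e1: "real dF * real c = real k * real k * real M"
    using cAF cAF2 DF unfolding dF_def c_def M_def by (metis of_nat_mult)
  have e2: "real d2 * (2 * real c) = real k * (real k - 1) * real M"
  proof -
    have "d2 * (2 * c) = k * (k - 1) * M" using cB2 cB22 D2q cardG unfolding d2_def c_def M_def by simp
    hence "real (d2 * (2 * c)) = real (k * (k - 1) * M)" by simp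
    thus ?thesis using assms(4) by (simp add: of_nat_diff)
  qed
  have e3: "2 * real (k choose 2) = real k * (real k - 1)"
  proof -
    have "real (2 * (k choose 2)) = real (k * (k - 1))" using two_choose by metis
    thus ?thesis using assms(4) by (simp add: of_nat_diff)
  qed
  have cpos: "real c > 0" using Fpos unfolding c_def by simp
  have kpos: "real k > 0" using assms(4) by simp
  have r2: "real d2 = real (k choose 2) * real dF / real k ^ 2"
  proof -
    have A: "real d2 = real k * (real k - 1) * real M / (2 * real c)" using e2 cpos by (simp add: field_simps)
    have B: "real dF = real k * real k * real M / real c" using e1 cpos by (simp add: field_simps)
    have C: "real (k choose 2) = real k * (real k - 1) / 2" using e3 by simp
    show ?thesis unfolding A B C using kpos cpos by (simp add: field_simps power2_eq_square)
  qed
  have r1: "real d1 = real dG - (real k - 1) * real dF / (2 * real k)"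
  proof -
    have "real dG = real d1 + real d2" using split unfolding dG_def d1_def d2_def by simp
    moreover have "real (k choose 2) * real dF / real k ^ 2 = (real k - 1) * real dF / (2 * real k)"
    proof -
      have C: "real (k choose 2) = real k * (real k - 1) / 2" using e3 by simp
      show ?thesis unfolding C using kpos by (simp add: field_simps power2_eq_square)
    qed
    ultimately show ?thesis using r2 by simp
  qed
  show ?thesis using r1 r2 unfolding d1_def d2_def dF_def dG_def by blast
qed

end
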